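(* Let $(\Omega,\mathcal F)$ be a measurable space, $\mathcal X$ the set of bounded measurable functions on it, $W$ a nonempty set of capacities, $V$ a nonempty set of binary capacities, and $\alpha\in(0,1)$. Define pointwise on $\mathcal F$: $\overline w=\sup_{w\in W}w$, $\underline w=\inf_{w\in W}w$, $\overline v=\sup_{v\in V}v$, $\underline v=\inf_{v\in V}v$. Then, as functions on $\mathcal X$, $$\sup_{w\in W}Q^w_\alpha=Q^{\overline w}_\alpha,\qquad \sup_{v\in V}I_v=I_{\overline v},\qquad \inf_{w\in W}\overline Q^w_\alpha=\overline Q^{\underline w}_\alpha,\qquad \inf_{v\in V}I_v=I_{\underline v}.$$
   Context: A capacity is an increasing function $w:\mathcal F\to\mathbb R$ (i.e. $w(A)\le w(B)$ for $A\subseteq B$) with $w(\varnothing)=0$, $w(\Omega)=1$; it is binary if it takes values in $\{0,1\}$. For a capacity $w$, $I_w(X)=\int X\,\mathrm dw=\int_{-\infty}^0(w(X\ge x)-1)\,\mathrm dx+\int_0^\infty w(X\ge x)\,\mathrm dx$ for $X\in\mathcal X$. For a capacity $w$: $Q^w_\alpha(X)=\inf\{x\in\mathbb R: w(X\ge x)\le 1-\alpha\}$ and $\overline Q^w_\alpha(X)=\inf\{x\in\mathbb R: w(X\ge x)<1-\alpha\}$. *)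

theory Defs
  imports "HOL-Analysis.Analysis"
begin

definition bmfun :: "'a measure \<Rightarrow> ('a \<Rightarrow> real) set" where
  "bmfun M = {X. X \<in> borel_measurable M \<and> bounded (X ` space M)}"

text \<open>Capacities on the sigma-algebra sets M (only values on sets M matter).\<close>
definition capacity :: "'a measure \<Rightarrow> ('a set \<Rightarrow> real) \<Rightarrow> bool" where
  "capacity M w \<longleftrightarrow>
     (\<forall>A\<in>sets M. \<forall>B\<in>sets M. A \<subseteq> B \<longrightarrow> w A \<le> w B) \<and>
     w {} = 0 \<and> w (space M) = 1"

definition binary_capacity :: "'a measure \<Rightarrow> ('a set \<Rightarrow> real) \<Rightarrow> bool" where
  "binary_capacity M w \<longleftrightarrow> capacity M w \<and> (\<forall>A\<in>sets M. w A \<in> {0, 1})"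

definition ge_set :: "'a measure \<Rightarrow> ('a \<Rightarrow> real) \<Rightarrow> real \<Rightarrow> 'a set" where
  "ge_set M X x = {\<omega> \<in> space M. x \<le> X \<omega>}"

definition choquet :: "'a measure \<Rightarrow> ('a set \<Rightarrow> real) \<Rightarrow> ('a \<Rightarrow> real) \<Rightarrow> real" where
  "choquet M w X =
     integral {..0} (\<lambda>x. w (ge_set M X x) - 1) + integral {0..} (\<lambda>x. w (ge_set M X x))"

definition quantile :: "'a measure \<Rightarrow> ('a set \<Rightarrow> real) \<Rightarrow> real \<Rightarrow> ('a \<Rightarrow> real) \<Rightarrow> real" where
  "quantile M w \<alpha> X = Inf {x. w (ge_set M X x) \<le> 1 - \<alpha>}"

definition upper_quantile :: "'a measure \<Rightarrow> ('a set \<Rightarrow> real) \<Rightarrow> real \<Rightarrow> ('a \<Rightarrow> real) \<Rightarrow> real" where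
  "upper_quantile M w \<alpha> X = Inf {x. w (ge_set M X x) < 1 - \<alpha>}"

end

theory Submission
  imports Defs
begin

lemma bm_bound: "X \<in> bmfun M \<Longrightarrow> \<exists>B. \<forall>\<omega>\<in>space M. \<bar>X \<omega>\<bar> \<le> B"
  unfolding bmfun_def bounded_iff by auto

lemma ge_sets: "X \<in> bmfun M \<Longrightarrow> ge_set M X x \<in> sets M"
  unfolding bmfun_def ge_set_def by measurable auto

lemma ge_low: "\<forall>\<omega>\<in>space M. \<bar>X \<omega>\<bar> \<le> B \<Longrightarrow> x \<le> -B \<Longrightarrow> ge_set M X x = space M"
  unfolding ge_set_def by force

lemma ge_high: "\<forall>\<omega>\<in>space M. \<bar>X \<omega>\<bar> \<le> B \<Longrightarrow> B < x \<Longrightarrow> ge_set M X x = {}"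
  unfolding ge_set_def by force

lemma ge_mono: "x \<le> y \<Longrightarrow> ge_set M X y \<subseteq> ge_set M X x"
  unfolding ge_set_def by auto

lemma cap_bounds: "capacity M w \<Longrightarrow> A \<in> sets M \<Longrightarrow> 0 \<le> w A \<and> w A \<le> 1"
  unfolding capacity_def using sets.sets_into_space[of A M] sets.empty_sets sets.top
  by (metis empty_subsetI)

lemma cap_mono: "capacity M w \<Longrightarrow> X \<in> bmfun M \<Longrightarrow> x \<le> y \<Longrightarrow> w (ge_set M X y) \<le> w (ge_set M X x)"
  unfolding capacity_def using ge_sets ge_mono by metis

lemma quantile_sup:
  assumes W: "W \<noteq> {}" "\<forall>w\<in>W. capacity M w" and X: "X \<in> bmfun M" and a: "0 < \<alpha>" "\<alpha> < 1"
  shows "(SUP w\<in>W. quantile M w \<alpha> X) = quantile M (\<lambda>A. SUP w\<in>W. w A) \<alpha> X"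
proof -
  obtain B where B: "\<forall>\<omega>\<in>space M. \<bar>X \<omega>\<bar> \<le> B" using bm_bound[OF X] by blast
  define S where "S w = {x. w (ge_set M X x) \<le> 1 - \<alpha>}" for w
  define S' where "S' = {x. \<forall>w\<in>W. w (ge_set M X x) \<le> 1 - \<alpha>}"
  have bdd: "bdd_above ((\<lambda>w. w (ge_set M X x)) ` W)" for x
    using cap_bounds W ge_sets[OF X] by (intro bdd_aboveI[where M=1]) blast
  have q': "quantile M (\<lambda>A. SUP w\<in>W. w A) \<alpha> X = Inf S'"
    unfolding quantile_def S'_def using cSUP_le_iff[OF W(1) bdd] by simp
  have q: "quantile M w \<alpha> X = Inf (S w)" for w unfolding quantile_def S_def by simp
  have Sin: "B+1 \<in> S w" if "w \<in> W" for w
    using ge_high[OF B, of "B+1"] W that a unfolding S_def capacity_def by auto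
  have Slow: "-B < x" if "w \<in> W" "x \<in> S w" for w x
  proof (rule ccontr)
    assume "\<not> -B < x"
    then have "ge_set M X x = space M" using ge_low[OF B] by auto
    then show False using that W a unfolding S_def capacity_def by auto
  qed
  have S'in: "B+1 \<in> S'" using Sin unfolding S_def S'_def by auto
  have S'sub: "S' \<subseteq> S w" if "w \<in> W" for w using that unfolding S_def S'_def by auto
  have bddS: "bdd_below (S w)" if "w \<in> W" for w
    using Slow[OF that] by (auto intro!: bdd_belowI[where m="-B"] less_imp_le)
  obtain w0 where w0: "w0 \<in> W" using W by auto
  have bddS': "bdd_below S'" using bddS[OF w0] S'sub[OF w0] by (rule bdd_below_mono)
  have le1: "Inf (S w) \<le> Inf S'" if "w \<in> W" for w
    by (rule cInf_superset_mono) (use S'in bddS that S'sub in auto)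
  have bddI: "bdd_above ((\<lambda>w. Inf (S w)) ` W)"
    using Sin bddS cInf_lower by (auto intro!: bdd_aboveI[where M="B+1"])
  define s where "s = (SUP w\<in>W. Inf (S w))"
  have sup: "Inf (S w) \<le> s" if "w \<in> W" for w unfolding s_def by (rule cSUP_upper[OF that bddI])
  have above: "x \<in> S'" if "s < x" for x
    unfolding S'_def mem_Collect_eq
  proof
    fix w assume w: "w \<in> W"
    have "Inf (S w) < x" using sup[OF w] that by auto
    then obtain y where y: "y \<in> S w" "y < x" using cInf_lessD Sin[OF w] by blast
    have "w (ge_set M X x) \<le> w (ge_set M X y)" using cap_mono[of M w X y x] W w X y by auto
    then show "w (ge_set M X x) \<le> 1 - \<alpha>" using y unfolding S_def by auto
  qed
  have "Inf S' \<le> s"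
  proof (rule field_le_epsilon)
    fix e :: real assume "0 < e"
    then show "Inf S' \<le> s + e" using above[of "s+e"] cInf_lower bddS' by auto
  qed
  moreover have "s \<le> Inf S'" unfolding s_def using le1 W(1) by (rule_tac cSUP_least) auto
  ultimately show ?thesis unfolding s_def by (subst q', simp add: q)
qed

lemma uquantile_inf:
  assumes W: "W \<noteq> {}" "\<forall>w\<in>W. capacity M w" and X: "X \<in> bmfun M" and a: "0 < \<alpha>" "\<alpha> < 1"
  shows "(INF w\<in>W. upper_quantile M w \<alpha> X) = upper_quantile M (\<lambda>A. INF w\<in>W. w A) \<alpha> X"
proof -
  obtain B where B: "\<forall>\<omega>\<in>space M. \<bar>X \<omega>\<bar> \<le> B" using bm_bound[OF X] by blast
  define S where "S w = {x. w (ge_set M X x) < 1 - \<alpha>}" for w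
  define S' where "S' = {x. \<exists>w\<in>W. w (ge_set M X x) < 1 - \<alpha>}"
  have bdd: "bdd_below ((\<lambda>w. w (ge_set M X x)) ` W)" for x
    using cap_bounds W ge_sets[OF X] by (intro bdd_belowI[where m=0]) blast
  have q': "upper_quantile M (\<lambda>A. INF w\<in>W. w A) \<alpha> X = Inf S'"
    unfolding upper_quantile_def S'_def using cINF_less_iff[OF W(1) bdd] by simp
  have q: "upper_quantile M w \<alpha> X = Inf (S w)" for w unfolding upper_quantile_def S_def by simp
  have Sin: "B+1 \<in> S w" if "w \<in> W" for w
    using ge_high[OF B, of "B+1"] W that a unfolding S_def capacity_def by auto
  have Slow: "-B < x" if "w \<in> W" "x \<in> S w" for w x
  proof (rule ccontr)
    assume "\<not> -B < x"
    then have "ge_set M X x = space M" using ge_low[OF B] by auto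
    then show False using that W a unfolding S_def capacity_def by auto
  qed
  have S'sub: "S w \<subseteq> S'" if "w \<in> W" for w using that unfolding S_def S'_def by auto
  have S'un: "\<exists>w\<in>W. x \<in> S w" if "x \<in> S'" for x using that unfolding S_def S'_def by auto
  have bddS': "bdd_below S'"
    using Slow S'un by (fastforce intro!: bdd_belowI[where m="-B"] less_imp_le)
  have ge1: "Inf S' \<le> Inf (S w)" if "w \<in> W" for w
    by (rule cInf_superset_mono) (use Sin bddS' that S'sub in auto)
  have bddI: "bdd_below ((\<lambda>w. Inf (S w)) ` W)"
  proof (rule bdd_belowI[where m="-B"])
    fix y assume "y \<in> (\<lambda>w. Inf (S w)) ` W"
    then obtain w where w: "w \<in> W" "y = Inf (S w)" by auto
    show "-B \<le> y" unfolding w(2) using Sin[OF w(1)] Slow[OF w(1)]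
      by (intro cInf_greatest) (auto intro: less_imp_le)
  qed
  have "(INF w\<in>W. Inf (S w)) \<le> Inf S'"
  proof (rule cInf_greatest)
    show "S' \<noteq> {}" using Sin S'sub W by blast
    fix x assume "x \<in> S'"
    then obtain w where w: "w \<in> W" "x \<in> S w" using S'un by blast
    have "(INF w\<in>W. Inf (S w)) \<le> Inf (S w)" by (rule cINF_lower[OF bddI w(1)])
    also have "\<dots> \<le> x" using w Slow by (intro cInf_lower) (auto intro!: bdd_belowI[where m="-B"] less_imp_le)
    finally show "(INF w\<in>W. Inf (S w)) \<le> x" .
  qed
  moreover have "Inf S' \<le> (INF w\<in>W. Inf (S w))" using ge1 W(1) by (rule_tac cINF_greatest) auto
  ultimately show ?thesis by (subst q', simp add: q)
qed

lemma binary_choquet: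
  assumes u: "binary_capacity M u" and X: "X \<in> bmfun M" and a: "0 < \<alpha>" "\<alpha> < 1"
  shows "choquet M u X = quantile M u \<alpha> X \<and> upper_quantile M u \<alpha> X = quantile M u \<alpha> X"
proof -
  obtain B where B: "\<forall>\<omega>\<in>space M. \<bar>X \<omega>\<bar> \<le> B" using bm_bound[OF X] by blast
  have cap: "capacity M u" using u unfolding binary_capacity_def by auto
  have bin: "u (ge_set M X x) = 0 \<or> u (ge_set M X x) = 1" for x
    using u ge_sets[OF X] unfolding binary_capacity_def by auto
  define S where "S = {x. u (ge_set M X x) = 0}"
  have S1: "{x. u (ge_set M X x) \<le> 1 - \<alpha>} = S" unfolding S_def using bin a by force
  have S2: "{x. u (ge_set M X x) < 1 - \<alpha>} = S" unfolding S_def using bin a by force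
  have qS: "quantile M u \<alpha> X = Inf S" unfolding quantile_def S1 ..
  have uS: "upper_quantile M u \<alpha> X = Inf S" unfolding upper_quantile_def S2 ..
  define c where "c = Inf S"
  have Sin: "B+1 \<in> S" using ge_high[OF B, of "B+1"] cap unfolding S_def capacity_def by auto
  have Slow: "-B < x" if "x \<in> S" for x
  proof (rule ccontr)
    assume "\<not> -B < x"
    then have "ge_set M X x = space M" using ge_low[OF B] by auto
    then show False using that cap unfolding S_def capacity_def by auto
  qed
  have bddS: "bdd_below S" using Slow by (auto intro!: bdd_belowI[where m="-B"] less_imp_le)
  have lt: "u (ge_set M X x) = 1" if "x < c" for x
  proof (rule ccontr)
    assume "u (ge_set M X x) \<noteq> 1"
    then have "x \<in> S" using bin unfolding S_def by auto
    then have "c \<le> x" unfolding c_def using bddS by (rule_tac cInf_lower) auto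
    then show False using that by auto
  qed
  have gt: "u (ge_set M X x) = 0" if "c < x" for x
  proof -
    have "Inf S < x" using that c_def by simp
    then obtain y where y: "y \<in> S" "y < x" using cInf_lessD[of S x] Sin by blast
    have "u (ge_set M X x) \<le> u (ge_set M X y)" using cap_mono[OF cap X, of y x] y by auto
    then show ?thesis using y bin[of x] unfolding S_def by auto
  qed
  have I1: "((\<lambda>x. u (ge_set M X x) - 1) has_integral min c 0) {..0}"
  proof -
    have "((\<lambda>x. -1::real) has_integral min c 0) {min c 0..0}"
      using has_integral_const_real[of "-1::real" "min c 0" 0] by simp
    then have "((\<lambda>x. if x \<in> {min c 0..0} then -1::real else 0) has_integral min c 0) {..0}"
      by (subst has_integral_restrict) auto
    then show ?thesis
      by (rule has_integral_spike_finite[where S="{c,0}", rotated 2]) (auto simp: lt gt)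
  qed
  have I2: "((\<lambda>x. u (ge_set M X x)) has_integral max c 0) {0..}"
  proof -
    have "((\<lambda>x. 1::real) has_integral max c 0) {0..max c 0}"
      using has_integral_const_real[of "1::real" 0 "max c 0"] by simp
    then have "((\<lambda>x. if x \<in> {0..max c 0} then 1::real else 0) has_integral max c 0) {0..}"
      by (subst has_integral_restrict) auto
    then show ?thesis
      by (rule has_integral_spike_finite[where S="{c,0}", rotated 2]) (auto simp: lt gt)
  qed
  have "choquet M u X = min c 0 + max c 0"
    unfolding choquet_def using integral_unique[OF I1] integral_unique[OF I2] by simp
  also have "\<dots> = c" by simp
  finally show ?thesis using qS uS c_def by simp
qed

lemma sup_binary:
  assumes V: "V \<noteq> {}" "\<forall>v\<in>V. binary_capacity M v"
  shows "binary_capacity M (\<lambda>A. SUP v\<in>V. v A)"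
proof -
  have vals: "(\<lambda>v. v A) ` V \<subseteq> {0,1}" if "A \<in> sets M" for A
    using V that unfolding binary_capacity_def by auto
  have bdd: "bdd_above ((\<lambda>v. v A) ` V)" if "A \<in> sets M" for A
    using vals[OF that] by (intro bdd_aboveI[where M=1]) auto
  have "(SUP v\<in>V. v A) \<in> {0,1}" if "A \<in> sets M" for A
  proof -
    have "finite ((\<lambda>v. v A) ` V)" using vals[OF that] finite_subset by blast
    then have "(SUP v\<in>V. v A) \<in> (\<lambda>v. v A) ` V" using V(1) cSup_eq_Max Max_in by fastforce
    then show ?thesis using vals[OF that] by blast
  qed
  moreover have "(SUP v\<in>V. v A) \<le> (SUP v\<in>V. v B)" if "A \<in> sets M" "B \<in> sets M" "A \<subseteq> B" for A B
    using V that bdd[OF that(2)] unfolding binary_capacity_def capacity_def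
    by (intro cSUP_mono) blast+
  moreover have "(SUP v\<in>V. v {}) = 0" "(SUP v\<in>V. v (space M)) = 1"
  proof -
    have e: "v {} = 0" "v (space M) = 1" if "v \<in> V" for v
      using V that unfolding binary_capacity_def capacity_def by auto
    have "(SUP v\<in>V. v {}) = (SUP v\<in>V. (0::real))" by (rule SUP_cong) (simp_all add: e)
    then show "(SUP v\<in>V. v {}) = 0" using V(1) by simp
    have "(SUP v\<in>V. v (space M)) = (SUP v\<in>V. (1::real))" by (rule SUP_cong) (simp_all add: e)
    then show "(SUP v\<in>V. v (space M)) = 1" using V(1) by simp
  qed
  ultimately show ?thesis unfolding binary_capacity_def capacity_def by auto
qed

lemma inf_binary:
  assumes V: "V \<noteq> {}" "\<forall>v\<in>V. binary_capacity M v"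
  shows "binary_capacity M (\<lambda>A. INF v\<in>V. v A)"
proof -
  have vals: "(\<lambda>v. v A) ` V \<subseteq> {0,1}" if "A \<in> sets M" for A
    using V that unfolding binary_capacity_def by auto
  have bdd: "bdd_below ((\<lambda>v. v A) ` V)" if "A \<in> sets M" for A
    using vals[OF that] by (intro bdd_belowI[where m=0]) auto
  have "(INF v\<in>V. v A) \<in> {0,1}" if "A \<in> sets M" for A
  proof -
    have "finite ((\<lambda>v. v A) ` V)" using vals[OF that] finite_subset by blast
    then have "(INF v\<in>V. v A) \<in> (\<lambda>v. v A) ` V" using V(1) cInf_eq_Min Min_in by fastforce
    then show ?thesis using vals[OF that] by blast
  qed
  moreover have "(INF v\<in>V. v A) \<le> (INF v\<in>V. v B)" if "A \<in> sets M" "B \<in> sets M" "A \<subseteq> B" for A B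
    using V that bdd[OF that(1)] unfolding binary_capacity_def capacity_def
    by (intro cINF_mono) blast+
  moreover have "(INF v\<in>V. v {}) = 0" "(INF v\<in>V. v (space M)) = 1"
  proof -
    have e: "v {} = 0" "v (space M) = 1" if "v \<in> V" for v
      using V that unfolding binary_capacity_def capacity_def by auto
    have "(INF v\<in>V. v {}) = (INF v\<in>V. (0::real))" by (rule INF_cong) (simp_all add: e)
    then show "(INF v\<in>V. v {}) = 0" using V(1) by simp
    have "(INF v\<in>V. v (space M)) = (INF v\<in>V. (1::real))" by (rule INF_cong) (simp_all add: e)
    then show "(INF v\<in>V. v (space M)) = 1" using V(1) by simp
  qed
  ultimately show ?thesis unfolding binary_capacity_def capacity_def by auto
qed

theorem proposition3:
  fixes M :: "'a measure" and W V :: "('a set \<Rightarrow> real) set" and \<alpha> :: real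
  assumes "W \<noteq> {}" and "\<forall>w\<in>W. capacity M w"
    and "V \<noteq> {}" and "\<forall>v\<in>V. binary_capacity M v"
    and "0 < \<alpha>" and "\<alpha> < 1"
  shows "(\<forall>X\<in>bmfun M. (SUP w\<in>W. quantile M w \<alpha> X) = quantile M (\<lambda>A. SUP w\<in>W. w A) \<alpha> X)
       \<and> (\<forall>X\<in>bmfun M. (SUP v\<in>V. choquet M v X) = choquet M (\<lambda>A. SUP v\<in>V. v A) X)
       \<and> (\<forall>X\<in>bmfun M. (INF w\<in>W. upper_quantile M w \<alpha> X) = upper_quantile M (\<lambda>A. INF w\<in>W. w A) \<alpha> X)
       \<and> (\<forall>X\<in>bmfun M. (INF v\<in>V. choquet M v X) = choquet M (\<lambda>A. INF v\<in>V. v A) X)"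
proof (intro conjI ballI)
  fix X assume X: "X \<in> bmfun M"
  have Vc: "\<forall>v\<in>V. capacity M v" using assms(4) unfolding binary_capacity_def by auto
  show "(SUP w\<in>W. quantile M w \<alpha> X) = quantile M (\<lambda>A. SUP w\<in>W. w A) \<alpha> X"
    using quantile_sup assms X by blast
  show "(INF w\<in>W. upper_quantile M w \<alpha> X) = upper_quantile M (\<lambda>A. INF w\<in>W. w A) \<alpha> X"
    using uquantile_inf assms X by blast
  have "(SUP v\<in>V. choquet M v X) = (SUP v\<in>V. quantile M v \<alpha> X)"
    using binary_choquet[OF _ X assms(5,6)] assms(4) by (intro SUP_cong) auto
  also have "\<dots> = quantile M (\<lambda>A. SUP v\<in>V. v A) \<alpha> X"
    using quantile_sup[OF assms(3) Vc X assms(5,6)] .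
  also have "\<dots> = choquet M (\<lambda>A. SUP v\<in>V. v A) X"
    using binary_choquet[OF sup_binary[OF assms(3,4)] X assms(5,6)] by simp
  finally show "(SUP v\<in>V. choquet M v X) = choquet M (\<lambda>A. SUP v\<in>V. v A) X" .
  have "(INF v\<in>V. choquet M v X) = (INF v\<in>V. upper_quantile M v \<alpha> X)"
    using binary_choquet[OF _ X assms(5,6)] assms(4) by (intro INF_cong) auto
  also have "\<dots> = upper_quantile M (\<lambda>A. INF v\<in>V. v A) \<alpha> X"
    using uquantile_inf[OF assms(3) Vc X assms(5,6)] .
  also have "\<dots> = choquet M (\<lambda>A. INF v\<in>V. v A) X"
    using binary_choquet[OF inf_binary[OF assms(3,4)] X assms(5,6)] by simp
  finally show "(INF v\<in>V. choquet M v X) = choquet M (\<lambda>A. INF v\<in>V. v A) X" .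
qed

end
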